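(* Let $p_1\ge p_2\ge\cdots\ge p_n$ be positive integers (not necessarily distinct). Let $q_1>q_2>\cdots>q_m$ be the distinct values among $p_1,\dots,p_n$. Then the number of distinct sequences in $\{S_c((p_1,\dots,p_n)) : c\in[0,1]\}$ equals the number of distinct sequences in $\{S_c((q_1,\dots,q_m)) : c\in[0,1]\}$.
   Context: Stationary divisor method with cut point $c\in[0,1]$ for a vote vector $\mathbf v=(v_1,\dots,v_r)$ with $v_1\ge\cdots\ge v_r$: seats are allocated one at a time. Initially each party $i$ has $a_i=0$ seats; each next seat goes to a party $i$ maximizing $v_i/(a_i+c)$, whose $a_i$ then increases by $1$. Ties are broken in favor of the smallest index. For $c=0$ the convention is that $v_i/0>v_j/0$ whenever $v_i>v_j$, ties among equal $v_i/0$ are broken by smallest index, and $v_i/0>v_j/k$ for every $k>0$. $S_c(\mathbf v)$ is the infinite sequence of indices of the parties receiving successive seats. *)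

theory Defs
  imports Complex_Main "HOL-Library.Equipollence"
begin

text \<open>Priority comparison for the stationary divisor method with cut point c.
  prio_ge c v a w b holds iff the quotient v/(a+c) is at least w/(b+c),
  with the convention for c = 0 that v/0 beats w/k for every k > 0 and
  v/0 versus w/0 is compared by v versus w.\<close>
definition prio_ge :: "real \<Rightarrow> real \<Rightarrow> nat \<Rightarrow> real \<Rightarrow> nat \<Rightarrow> bool" where
  "prio_ge c v a w b =
     (if real a + c = 0 then (real b + c \<noteq> 0 \<or> w \<le> v)
      else (real b + c \<noteq> 0 \<and> w / (real b + c) \<le> v / (real a + c)))"

definition winner :: "real \<Rightarrow> real list \<Rightarrow> (nat \<Rightarrow> nat) \<Rightarrow> nat" where
  "winner c vs a =
     (LEAST i. i < length vs \<and> (\<forall>j < length vs. prio_ge c (vs ! i) (a i) (vs ! j) (a j)))"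

fun seats :: "real \<Rightarrow> real list \<Rightarrow> nat \<Rightarrow> (nat \<Rightarrow> nat)" where
  "seats c vs 0 = (\<lambda>_. 0)"
| "seats c vs (Suc k) =
     (let a = seats c vs k; i = winner c vs a in a(i := Suc (a i)))"

text \<open>The seat sequence S_c(v): the k-th entry (from 0) is the (0-based) index of the
  party receiving seat number k+1.\<close>
definition S_seq :: "real \<Rightarrow> real list \<Rightarrow> nat \<Rightarrow> nat" where
  "S_seq c vs k = winner c vs (seats c vs k)"

end

theory Submission
  imports Defs "HOL-Library.Product_Lexorder"
begin

definition key :: "real \<Rightarrow> real \<Rightarrow> nat \<Rightarrow> real \<times> real" where
  "key c v a = (if real a + c = 0 then (1, v) else (0, v / (real a + c)))"

lemma prio_key: "prio_ge c v a w b \<longleftrightarrow> key c w b \<le> key c v a"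
  unfolding prio_ge_def key_def by (auto simp: less_eq_prod_def)

lemma key_mono:
  assumes "b' \<le> b" "y \<ge> 0" "c \<ge> 0"
  shows "key c y b \<le> key c y b'"
proof (cases "real b' + c = 0")
  case True
  then show ?thesis unfolding key_def by (auto simp: less_eq_prod_def)
next
  case False
  then have "real b' + c > 0" using assms by simp
  moreover have "real b' + c \<le> real b + c" using assms by simp
  ultimately have "y / (real b + c) \<le> y / (real b' + c)"
    using assms by (intro divide_left_mono) auto
  then show ?thesis using False \<open>real b' + c > 0\<close> \<open>real b' + c \<le> real b + c\<close>
    unfolding key_def by (auto simp: less_eq_prod_def)
qed

lemma prio_same:
  assumes "x > 0" "c \<ge> 0"
  shows "prio_ge c x a x b \<longleftrightarrow> a \<le> b"
proof (cases "real a + c = 0")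
  case True
  then show ?thesis using assms unfolding prio_ge_def by auto
next
  case False
  show ?thesis
  proof (cases "real b + c = 0")
    case True
    then show ?thesis using False assms unfolding prio_ge_def by auto
  next
    case F2: False
    have pa: "real a + c > 0" "real b + c > 0" using False F2 assms by auto
    have "x / (real b + c) \<le> x / (real a + c) \<longleftrightarrow> real a + c \<le> real b + c"
      using pa assms by (simp add: divide_le_cancel frac_le_eq field_simps)
    then show ?thesis using False F2 unfolding prio_ge_def by auto
  qed
qed

lemma winner_max:
  assumes "length vs > 0"
  shows "winner c vs a < length vs \<and>
    (\<forall>j < length vs. prio_ge c (vs ! winner c vs a) (a (winner c vs a)) (vs ! j) (a j))"
proof -
  define K where "K j = key c (vs ! j) (a j)" for j
  let ?n = "length vs"
  have fin: "finite (K ` {..<?n})" "K ` {..<?n} \<noteq> {}" using assms by auto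
  then have "Max (K ` {..<?n}) \<in> K ` {..<?n}" by (rule Max_in)
  then obtain i0 where i0: "i0 < ?n" "K i0 = Max (K ` {..<?n})" by auto
  have "\<forall>j < ?n. K j \<le> K i0" using i0 fin by auto
  then have "i0 < ?n \<and> (\<forall>j < ?n. prio_ge c (vs ! i0) (a i0) (vs ! j) (a j))"
    using i0 by (auto simp: prio_key K_def)
  then show ?thesis unfolding winner_def by (rule LeastI)
qed

lemma winner_min:
  assumes "length vs > 0" "j < winner c vs a"
  shows "\<not> prio_ge c (vs ! j) (a j) (vs ! winner c vs a) (a (winner c vs a))"
proof
  assume h: "prio_ge c (vs ! j) (a j) (vs ! winner c vs a) (a (winner c vs a))"
  have wm: "winner c vs a < length vs \<and>
    (\<forall>k < length vs. prio_ge c (vs ! winner c vs a) (a (winner c vs a)) (vs ! k) (a k))"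
    using winner_max[OF assms(1)] .
  have "j < length vs \<and> (\<forall>k < length vs. prio_ge c (vs ! j) (a j) (vs ! k) (a k))"
    using wm h assms(2) by (auto simp: prio_key intro: order_trans)
  moreover have "\<not> (j < length vs \<and> (\<forall>k < length vs. prio_ge c (vs ! j) (a j) (vs ! k) (a k)))"
    using assms(2) unfolding winner_def by (rule not_less_Least)
  ultimately show False by blast
qed

lemma winner_eq:
  assumes agree: "\<forall>i j a b. i < j \<and> j < length vs \<longrightarrow>
      (prio_ge c (vs ! i) a (vs ! j) b \<longleftrightarrow> prio_ge c' (vs ! i) a (vs ! j) b)"
  shows "winner c vs a = winner c' vs a"
proof (cases "length vs = 0")
  case True
  then show ?thesis unfolding winner_def by simp
next
  case False
  then have n: "length vs > 0" by simp
  let ?w = "winner c vs a" and ?w' = "winner c' vs a"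
  have m1: "?w < length vs" "\<forall>j < length vs. prio_ge c (vs ! ?w) (a ?w) (vs ! j) (a j)"
    using winner_max[OF n] by auto
  have m2: "?w' < length vs" "\<forall>j < length vs. prio_ge c' (vs ! ?w') (a ?w') (vs ! j) (a j)"
    using winner_max[OF n] by auto
  show ?thesis
  proof (rule ccontr)
    assume "?w \<noteq> ?w'"
    then consider "?w < ?w'" | "?w' < ?w" by linarith
    then show False
    proof cases
      case 1
      then show False using winner_min[OF n, of ?w c' a] m1 m2 agree by auto
    next
      case 2
      then show False using winner_min[OF n, of ?w' c a] m1 m2 agree by auto
    qed
  qed
qed

lemma seats_eq_of_agree:
  assumes "\<forall>i j a b. i < j \<and> j < length vs \<longrightarrow>
      (prio_ge c (vs ! i) a (vs ! j) b \<longleftrightarrow> prio_ge c' (vs ! i) a (vs ! j) b)"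
  shows "seats c vs k = seats c' vs k"
  by (induction k) (simp_all add: Let_def winner_eq[OF assms])

lemma seats_eq_of_S:
  assumes "S_seq c vs = S_seq c' vs"
  shows "seats c vs k = seats c' vs k"
proof (induction k)
  case 0 then show ?case by simp
next
  case (Suc k)
  have "winner c vs (seats c vs k) = winner c' vs (seats c' vs k)"
    using fun_cong[OF assms, of k] unfolding S_seq_def .
  then show ?case using Suc by (simp add: Let_def)
qed

lemma seats_Suc_ge: "seats c vs k j \<le> seats c vs (Suc k) j"
  by (simp add: Let_def)

lemma seats_mono: "k \<le> k' \<Longrightarrow> seats c vs k j \<le> seats c vs k' j"
  apply (induction k' rule: dec_induct)
   apply simp
  by (metis le_trans seats_Suc_ge)

lemma seats_step:
  "seats c vs k i > a \<Longrightarrow> \<exists>k' < k. seats c vs k' i = a \<and> winner c vs (seats c vs k') = i"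
proof (induction k)
  case 0 then show ?case by simp
next
  case (Suc k)
  show ?case
  proof (cases "seats c vs k i > a")
    case True then show ?thesis using Suc.IH by (meson less_SucI)
  next
    case False
    then have "winner c vs (seats c vs k) = i \<and> seats c vs k i = a"
      using Suc.prems by (auto simp: Let_def split: if_splits)
    then show ?thesis by auto
  qed
qed

lemma seats_sum:
  assumes "length vs > 0"
  shows "(\<Sum>i<length vs. seats c vs k i) = k"
proof (induction k)
  case 0 then show ?case by simp
next
  case (Suc k)
  let ?a = "seats c vs k" and ?w = "winner c vs (seats c vs k)"
  have w: "?w \<in> {..<length vs}" using winner_max[OF assms] by auto
  have "(\<Sum>i<length vs. seats c vs (Suc k) i) = (\<Sum>i<length vs. (?a(?w := Suc (?a ?w))) i)"
    by (simp add: Let_def)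
  also have "\<dots> = Suc (?a ?w) + (\<Sum>i\<in>{..<length vs} - {?w}. ?a i)"
    using w by (subst sum.remove[OF _ w]) auto
  also have "\<dots> = Suc (\<Sum>i<length vs. ?a i)"
    using sum.remove[OF _ w, of ?a] by simp
  finally show ?case using Suc.IH by simp
qed

lemma liveness:
  assumes pos: "\<forall>x\<in>set vs. x \<ge> 1" and c: "0 \<le> c" "c \<le> 1" and i: "i < length vs"
  shows "\<exists>k. seats c vs k i > a"
proof (rule ccontr)
  assume "\<not> ?thesis"
  then have stuck: "\<And>k. seats c vs k i \<le> a" by (simp add: not_less)
  let ?n = "length vs"
  have n: "?n > 0" using i by linarith
  define V where "V = Max (set vs)"
  have Vge: "\<And>j. j < ?n \<Longrightarrow> vs ! j \<le> V" unfolding V_def by (simp add: Max_ge)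
  have V1: "V \<ge> 1" using Vge[OF i] pos i by (meson nth_mem order_trans)
  define M :: nat where "M = nat \<lceil>V * (real a + 1)\<rceil> + 1"
  have MV: "real M > V * (real a + 1)" unfolding M_def by linarith
  have Ma: "M > a"
  proof -
    have "V * (real a + 1) \<ge> real a + 1" using V1 by (simp add: mult_le_cancel_right1)
    then show ?thesis using MV by linarith
  qed
  define k where "k = ?n * (M + 1)"
  have "\<exists>m < ?n. seats c vs k m > M"
  proof (rule ccontr)
    assume "\<not> ?thesis"
    then have "\<And>m. m \<in> {..<?n} \<Longrightarrow> seats c vs k m \<le> M" by auto
    then have "(\<Sum>m<?n. seats c vs k m) \<le> card {..<?n} * M"
      using sum_bounded_above by (metis of_nat_id)
    then have "k \<le> ?n * M" using seats_sum[OF n] by simp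
    then show False unfolding k_def using n by simp
  qed
  then obtain m where m: "m < ?n" "seats c vs k m > M" by blast
  then obtain k' where k': "seats c vs k' m = M" "winner c vs (seats c vs k') = m"
    using seats_step by blast
  define ai where "ai = seats c vs k' i"
  have ai: "ai \<le> a" using stuck unfolding ai_def by simp
  have "prio_ge c (vs ! m) M (vs ! i) ai"
    using winner_max[OF n, of c "seats c vs k'"] k' i unfolding ai_def by auto
  moreover have Mpos: "real M + c > 0" using Ma c by simp
  ultimately have h: "real ai + c \<noteq> 0" "vs ! i / (real ai + c) \<le> vs ! m / (real M + c)"
    unfolding prio_ge_def by auto
  have aipos: "real ai + c > 0" using h(1) c by simp
  have vi: "vs ! i \<ge> 1" using pos i by simp
  have vm: "vs ! m \<le> V" "vs ! m \<ge> 1" using Vge m pos by auto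
  have "1 / (real a + 1) \<le> 1 / (real ai + c)"
    using aipos ai c by (intro divide_left_mono) auto
  also have "\<dots> \<le> vs ! i / (real ai + c)"
    using aipos vi by (intro divide_right_mono) auto
  also have "\<dots> \<le> vs ! m / (real M + c)" by (rule h(2))
  also have "\<dots> \<le> V / real M"
    using Mpos Ma vm c by (intro frac_le) auto
  finally have "1 / (real a + 1) \<le> V / real M" .
  then have "real M \<le> V * (real a + 1)" using Ma
    by (simp add: field_simps)
  then show False using MV by simp
qed

lemma E1_prio:
  assumes pos: "\<forall>x\<in>set vs. x \<ge> 1" and c: "0 \<le> c" and ij: "i < length vs" "j < length vs"
    and E: "seats c vs k i > a" "seats c vs k j \<le> b"
  shows "prio_ge c (vs ! i) a (vs ! j) b"
proof -
  have n: "length vs > 0" using ij by linarith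
  obtain k' where k': "k' < k" "seats c vs k' i = a" "winner c vs (seats c vs k') = i"
    using seats_step[OF E(1)] by blast
  have b': "seats c vs k' j \<le> b" using seats_mono[of k' k] k'(1) E(2) by (meson le_trans less_imp_le)
  have "prio_ge c (vs ! i) a (vs ! j) (seats c vs k' j)"
    using winner_max[OF n, of c "seats c vs k'"] k' ij by auto
  moreover have "vs ! j \<ge> 0" using pos ij by (meson nth_mem order_trans zero_le_one)
  ultimately show ?thesis using key_mono[OF b' _ c] by (auto simp: prio_key intro: order_trans)
qed

lemma E2_prio:
  assumes pos: "\<forall>x\<in>set vs. x \<ge> 1" and c: "0 \<le> c" and ij: "i < j" "j < length vs"
    and E: "seats c vs k j > b" "seats c vs k i \<le> a"
  shows "\<not> prio_ge c (vs ! i) a (vs ! j) b"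
proof
  assume h: "prio_ge c (vs ! i) a (vs ! j) b"
  have n: "length vs > 0" using ij by linarith
  obtain k' where k': "k' < k" "seats c vs k' j = b" "winner c vs (seats c vs k') = j"
    using seats_step[OF E(1)] by blast
  have a': "seats c vs k' i \<le> a" using seats_mono[of k' k] k'(1) E(2) by (meson le_trans less_imp_le)
  have "\<not> prio_ge c (vs ! i) (seats c vs k' i) (vs ! j) b"
    using winner_min[OF n, of i c "seats c vs k'"] k' ij by auto
  moreover have "vs ! i \<ge> 0" using pos ij by (meson nth_mem order_trans zero_le_one less_trans)
  ultimately show False using key_mono[OF a' _ c] h by (auto simp: prio_key intro: order_trans)
qed

lemma prio_iff_E1:
  assumes pos: "\<forall>x\<in>set vs. x \<ge> 1" and c: "0 \<le> c" "c \<le> 1" and ij: "i < j" "j < length vs"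
  shows "prio_ge c (vs ! i) a (vs ! j) b \<longleftrightarrow>
    (\<exists>k. seats c vs k i > a \<and> seats c vs k j \<le> b)"
proof
  assume "\<exists>k. seats c vs k i > a \<and> seats c vs k j \<le> b"
  then show "prio_ge c (vs ! i) a (vs ! j) b" using E1_prio[OF pos c(1)] ij by auto
next
  assume p: "prio_ge c (vs ! i) a (vs ! j) b"
  show "\<exists>k. seats c vs k i > a \<and> seats c vs k j \<le> b"
  proof (rule ccontr)
    assume nE1: "\<not> ?thesis"
    obtain k where k: "seats c vs k i > a" using liveness[OF pos c, of i a] ij by auto
    then have "seats c vs k j > b" using nE1 by auto
    then obtain k' where k': "seats c vs k' j = b" "winner c vs (seats c vs k') = j"
      using seats_step by blast
    show False
    proof (cases "seats c vs k' i > a")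
      case True
      then show False using nE1 k' by auto
    next
      case False
      have "seats c vs (Suc k') j > b" "seats c vs (Suc k') i \<le> a"
        using k' False ij by (auto simp: Let_def)
      then show False using E2_prio[OF pos c(1) ij] p by blast
    qed
  qed
qed

lemma agree_of_S:
  assumes pos: "\<forall>x\<in>set vs. x \<ge> 1" and c: "0 \<le> c" "c \<le> 1" and c': "0 \<le> c'" "c' \<le> 1"
    and S: "S_seq c vs = S_seq c' vs"
  shows "\<forall>i j a b. i < j \<and> j < length vs \<longrightarrow>
      (prio_ge c (vs ! i) a (vs ! j) b \<longleftrightarrow> prio_ge c' (vs ! i) a (vs ! j) b)"
  using prio_iff_E1[OF pos c] prio_iff_E1[OF pos c'] seats_eq_of_S[OF S] by auto

lemma S_iff_agree:
  assumes pos: "\<forall>x\<in>set vs. x \<ge> 1" and c: "0 \<le> c" "c \<le> 1" and c': "0 \<le> c'" "c' \<le> 1"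
  shows "S_seq c vs = S_seq c' vs \<longleftrightarrow> (\<forall>i j a b. i < j \<and> j < length vs \<longrightarrow>
      (prio_ge c (vs ! i) a (vs ! j) b \<longleftrightarrow> prio_ge c' (vs ! i) a (vs ! j) b))"
proof
  assume "S_seq c vs = S_seq c' vs"
  then show "\<forall>i j a b. i < j \<and> j < length vs \<longrightarrow>
      (prio_ge c (vs ! i) a (vs ! j) b \<longleftrightarrow> prio_ge c' (vs ! i) a (vs ! j) b)"
    using agree_of_S[OF pos c c'] by blast
next
  assume h: "\<forall>i j a b. i < j \<and> j < length vs \<longrightarrow>
      (prio_ge c (vs ! i) a (vs ! j) b \<longleftrightarrow> prio_ge c' (vs ! i) a (vs ! j) b)"
  show "S_seq c vs = S_seq c' vs"
    unfolding S_seq_def using seats_eq_of_agree[OF h] winner_eq[OF h] by auto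
qed

lemma agree_iff_D:
  assumes pos: "\<forall>x\<in>set vs. x \<ge> 1" and srt: "sorted_wrt (\<ge>) vs"
    and c: "0 \<le> c" and c': "0 \<le> c'"
  shows "(\<forall>i j a b. i < j \<and> j < length vs \<longrightarrow>
      (prio_ge c (vs ! i) a (vs ! j) b \<longleftrightarrow> prio_ge c' (vs ! i) a (vs ! j) b))
    \<longleftrightarrow> (\<forall>x y a b. x \<in> set vs \<and> y \<in> set vs \<and> y < x \<longrightarrow>
      (prio_ge c x a y b \<longleftrightarrow> prio_ge c' x a y b))"
proof
  assume h: "\<forall>i j a b. i < j \<and> j < length vs \<longrightarrow>
      (prio_ge c (vs ! i) a (vs ! j) b \<longleftrightarrow> prio_ge c' (vs ! i) a (vs ! j) b)"
  show "\<forall>x y a b. x \<in> set vs \<and> y \<in> set vs \<and> y < x \<longrightarrow>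
      (prio_ge c x a y b \<longleftrightarrow> prio_ge c' x a y b)"
  proof (intro allI impI)
    fix x y a b assume xy: "x \<in> set vs \<and> y \<in> set vs \<and> y < x"
    then obtain i j where ij: "i < length vs" "j < length vs" "x = vs ! i" "y = vs ! j"
      by (metis in_set_conv_nth)
    have "i < j"
    proof (rule ccontr)
      assume "\<not> i < j"
      then consider "i = j" | "j < i" by linarith
      then show False
      proof cases
        case 1 then show False using xy ij by simp
      next
        case 2 then have "vs ! i \<le> vs ! j" using srt ij by (simp add: sorted_wrt_iff_nth_less)
        then show False using xy ij by simp
      qed
    qed
    then show "prio_ge c x a y b \<longleftrightarrow> prio_ge c' x a y b" using h ij by blast
  qed
next
  assume h: "\<forall>x y a b. x \<in> set vs \<and> y \<in> set vs \<and> y < x \<longrightarrow>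
      (prio_ge c x a y b \<longleftrightarrow> prio_ge c' x a y b)"
  show "\<forall>i j a b. i < j \<and> j < length vs \<longrightarrow>
      (prio_ge c (vs ! i) a (vs ! j) b \<longleftrightarrow> prio_ge c' (vs ! i) a (vs ! j) b)"
  proof (intro allI impI)
    fix i j a b assume ij: "i < j \<and> j < length vs"
    then have ge: "vs ! j \<le> vs ! i" using srt by (simp add: sorted_wrt_iff_nth_less)
    have mem: "vs ! i \<in> set vs" "vs ! j \<in> set vs" using ij by auto
    show "prio_ge c (vs ! i) a (vs ! j) b \<longleftrightarrow> prio_ge c' (vs ! i) a (vs ! j) b"
    proof (cases "vs ! j = vs ! i")
      case True
      have "vs ! i > 0" using pos mem by fastforce
      then show ?thesis using True prio_same[OF _ c] prio_same[OF _ c'] by simp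
    next
      case False
      then show ?thesis using h mem ge by auto
    qed
  qed
qed

theorem mainTheorem19:
  fixes p q :: "nat list"
  assumes "sorted_wrt (\<ge>) p"
    and "\<forall>x \<in> set p. x > 0"
    and "sorted_wrt (>) q"
    and "set q = set p"
  shows "{S_seq c (map real p) | c. 0 \<le> c \<and> c \<le> 1}
           \<approx> {S_seq c (map real q) | c. 0 \<le> c \<and> c \<le> 1}"
proof -
  let ?P = "map real p" and ?Q = "map real q"
  have posP: "\<forall>x\<in>set ?P. x \<ge> 1" using assms(2) by auto
  have posQ: "\<forall>x\<in>set ?Q. x \<ge> 1" using assms(2,4) by auto
  have sP: "sorted_wrt (\<ge>) ?P" using assms(1) by (simp add: sorted_wrt_map)
  have "sorted_wrt (\<ge>) q" using assms(3) sorted_wrt_mono_rel[of q "(>)" "(\<ge>)"] by auto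
  then have sQ: "sorted_wrt (\<ge>) ?Q" by (simp add: sorted_wrt_map)
  have setPQ: "set ?Q = set ?P" using assms(4) by simp
  define f where "f c = S_seq c ?P" for c
  define g where "g c = S_seq c ?Q" for c
  have eqv: "f c = f c' \<longleftrightarrow> g c = g c'" if "0 \<le> c" "c \<le> 1" "0 \<le> c'" "c' \<le> 1" for c c'
    unfolding f_def g_def
    using S_iff_agree[OF posP that] S_iff_agree[OF posQ that]
      agree_iff_D[OF posP sP that(1,3)] agree_iff_D[OF posQ sQ that(1,3)] setPQ
    by simp
  define A where "A = {f c | c. 0 \<le> c \<and> c \<le> 1}"
  define B where "B = {g c | c. 0 \<le> c \<and> c \<le> 1}"
  define h where "h s = g (SOME c. 0 \<le> c \<and> c \<le> 1 \<and> f c = s)" for s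
  have hs: "h (f c) = g c" if "0 \<le> c" "c \<le> 1" for c
  proof -
    have ex: "\<exists>d. 0 \<le> d \<and> d \<le> 1 \<and> f d = f c" using that by blast
    let ?d = "SOME d. 0 \<le> d \<and> d \<le> 1 \<and> f d = f c"
    have "0 \<le> ?d \<and> ?d \<le> 1 \<and> f ?d = f c" using someI_ex[OF ex] .
    then show ?thesis unfolding h_def using eqv that by blast
  qed
  have "bij_betw h A B"
  proof (rule bij_betw_imageI)
    show "inj_on h A"
    proof (rule inj_onI)
      fix s t assume "s \<in> A" "t \<in> A" "h s = h t"
      then obtain c d where "s = f c" "t = f d" "0 \<le> c" "c \<le> 1" "0 \<le> d" "d \<le> 1" "g c = g d"
        unfolding A_def using hs by auto
      then show "s = t" using eqv by blast
    qed
    show "h ` A = B"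
    proof
      show "h ` A \<subseteq> B" unfolding A_def B_def using hs by auto
      show "B \<subseteq> h ` A"
      proof
        fix t assume "t \<in> B"
        then obtain c where "t = g c" "0 \<le> c" "c \<le> 1" unfolding B_def by auto
        then show "t \<in> h ` A" unfolding A_def using hs by (intro image_eqI[of _ _ "f c"]) auto
      qed
    qed
  qed
  then show ?thesis unfolding eqpoll_def A_def B_def f_def g_def by blast
qed

end
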